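(* Let $n>d\geq 1$ and let $\Phi$ be a real, additive gain graph on vertex set $V=\{1,\dots,n\}$ with edge set $E$. Then there is an open dense subset $\mathcal{G}\subseteq(\mathbb{E}^d)^n$ of $n$-tuples of distinct points such that for every $\mathbf{Q}=(Q_1,\dots,Q_n)\in\mathcal{G}$, writing $\mathcal{H}=\mathcal{H}(\Phi;\mathbf{Q})$, the following hold. (a) For every edge set $S\subseteq E$, writing $c(S)=n-m$, the intersection $\bigcap_{e\in S}h(e)$ is empty if $S$ is unbalanced or if $m>d$; otherwise it is a nonempty affine flat of dimension $d-m$. (b) For edge sets $S_1,S_2\subseteq E$, the intersections $\bigcap_{e\in S_1}h(e)$ and $\bigcap_{e\in S_2}h(e)$ are equal and nonempty if and only if $S_1\cup S_2$ is balanced and the connected components of $(V,S_1)$ and of $(V,S_2)$ partition $V$ in the same way, into at least $n-d$ parts.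
   Context: $\mathbb{E}^d$ is Euclidean $d$-space with distance $d(\cdot,\cdot)$. For points $Q_i,Q_j$ the Pythagorean coordinate of a point $P$ is $\psi_{ij}(P)=d(P,Q_i)^2-d(P,Q_j)^2$; if $Q_i\neq Q_j$, each level set $\{\psi_{ij}=c\}$ is a hyperplane perpendicular to the line $Q_iQ_j$. A real, additive gain graph $\Phi$ on vertex set $V=\{1,\dots,n\}$ consists of a finite graph with edge set $E$ (multiple edges allowed; every edge has two distinct endpoints) together with a gain function assigning to each edge $e$ with endpoints $i,j$ a real number $\phi(e;i,j)$, where $\phi(e;j,i)=-\phi(e;i,j)$. An edge set $S\subseteq E$ is balanced if for every circle (simple closed path) contained in $S$ the sum of the gains of its edges, read in a consistent direction around the circle, is $0$. $c(S)$ denotes the number of connected components of the spanning subgraph $(V,S)$, isolated vertices counting as components. For $\mathbf{Q}=(Q_1,\dots,Q_n)\in(\mathbb{E}^d)^n$ with $Q_i\neq Q_j$ whenever $i,j$ are adjacent, the Pythagorean arrangement $\mathcal{H}(\Phi;\mathbf{Q})$ consists of the hyperplanes $h(e)=\{P\in\mathbb{E}^d:\psi_{ij}(P)=\phi(e;i,j)\}$, one for each edge $e$ with endpoints $i,j$. The intersection over the empty edge set is $\mathbb{E}^d$. *)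

theory Defs
  imports "HOL-Analysis.Analysis"
begin

text \<open>A real additive gain graph: edges of type 'e (edge set E), each edge e has
  endpoints src e and tgt e (distinct), and gain phi e = phi(e; src e, tgt e).
  Vertices are the elements of the finite type 'n (playing the role of {1..n}).\<close>

definition oriented_gain ::
  "('e \<Rightarrow> 'n) \<Rightarrow> ('e \<Rightarrow> 'n) \<Rightarrow> ('e \<Rightarrow> real) \<Rightarrow> 'e \<Rightarrow> 'n \<Rightarrow> 'n \<Rightarrow> real" where
  "oriented_gain src tgt phi e i j = (if src e = i \<and> tgt e = j then phi e else - phi e)"

definition is_circle ::
  "('e \<Rightarrow> 'n) \<Rightarrow> ('e \<Rightarrow> 'n) \<Rightarrow> 'e set \<Rightarrow> 'n list \<Rightarrow> 'e list \<Rightarrow> bool" where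
  "is_circle src tgt S vs es \<longleftrightarrow>
     length vs = length es \<and> 2 \<le> length es \<and> distinct vs \<and> distinct es \<and> set es \<subseteq> S \<and>
     (\<forall>i<length es. {src (es!i), tgt (es!i)} = {vs!i, vs!((i+1) mod length vs)})"

definition balanced ::
  "('e \<Rightarrow> 'n) \<Rightarrow> ('e \<Rightarrow> 'n) \<Rightarrow> ('e \<Rightarrow> real) \<Rightarrow> 'e set \<Rightarrow> bool" where
  "balanced src tgt phi S \<longleftrightarrow>
     (\<forall>vs es. is_circle src tgt S vs es \<longrightarrow>
        (\<Sum>i<length es. oriented_gain src tgt phi (es!i) (vs!i) (vs!((i+1) mod length vs))) = 0)"

definition conn_rel :: "('e \<Rightarrow> 'n) \<Rightarrow> ('e \<Rightarrow> 'n) \<Rightarrow> 'e set \<Rightarrow> ('n \<times> 'n) set" where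
  "conn_rel src tgt S = ({(src e, tgt e) | e. e \<in> S} \<union> {(tgt e, src e) | e. e \<in> S})\<^sup>*"

definition components :: "('e \<Rightarrow> 'n) \<Rightarrow> ('e \<Rightarrow> 'n) \<Rightarrow> 'e set \<Rightarrow> 'n set set" where
  "components src tgt S = (UNIV :: 'n set) // conn_rel src tgt S"

definition ncomp :: "('e \<Rightarrow> 'n) \<Rightarrow> ('e \<Rightarrow> 'n) \<Rightarrow> 'e set \<Rightarrow> nat" where
  "ncomp src tgt S = card (components src tgt S)"

definition pyth :: "'a::euclidean_space \<Rightarrow> 'a \<Rightarrow> 'a \<Rightarrow> real" where
  "pyth Qi Qj P = (dist P Qi)\<^sup>2 - (dist P Qj)\<^sup>2"

definition hyp :: "('e \<Rightarrow> 'n::finite) \<Rightarrow> ('e \<Rightarrow> 'n) \<Rightarrow> ('e \<Rightarrow> real) \<Rightarrow> ('a::euclidean_space)^'n \<Rightarrow> 'e \<Rightarrow> 'a set" where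
  "hyp src tgt phi Q e = {P. pyth (Q $ src e) (Q $ tgt e) P = phi e}"

definition inter_hyp :: "('e \<Rightarrow> 'n::finite) \<Rightarrow> ('e \<Rightarrow> 'n) \<Rightarrow> ('e \<Rightarrow> real) \<Rightarrow> ('a::euclidean_space)^'n \<Rightarrow> 'e set \<Rightarrow> 'a set" where
  "inter_hyp src tgt phi Q S = (\<Inter>e\<in>S. hyp src tgt phi Q e)"

end

theory Submission
  imports Defs
begin


lemma conn_equiv: "equiv UNIV (conn_rel src tgt S)"
proof -
  let ?R = "{(src e, tgt e) | e. e \<in> S} \<union> {(tgt e, src e) | e. e \<in> S}"
  have "sym ?R" unfolding sym_def by blast
  then have "sym (?R\<^sup>*)" by (rule sym_rtrancl)
  then show ?thesis unfolding conn_rel_def equiv_def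
    by (auto simp: refl_on_def trans_rtrancl)
qed

lemma conn_edge: "e \<in> S \<Longrightarrow> (src e, tgt e) \<in> conn_rel src tgt S"
  "e \<in> S \<Longrightarrow> (tgt e, src e) \<in> conn_rel src tgt S"
  unfolding conn_rel_def by blast+

lemma conn_mono: "S \<subseteq> T \<Longrightarrow> conn_rel src tgt S \<subseteq> conn_rel src tgt T"
  unfolding conn_rel_def by (rule rtrancl_mono) blast

lemma conn_const:
  assumes "\<And>e. e \<in> S \<Longrightarrow> f (src e) = f (tgt e)" "(i,j) \<in> conn_rel src tgt S"
  shows "f i = f j"
  using assms(2) unfolding conn_rel_def
proof (induction rule: rtrancl_induct)
  case base then show ?case by simp
next
  case (step y z) then show ?case using assms(1) by force
qed

definition croot where "croot src tgt S i = (SOME j. (i,j) \<in> conn_rel src tgt S)"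

lemma root_rel: "(i, croot src tgt S i) \<in> conn_rel src tgt S"
proof -
  have "(i,i) \<in> conn_rel src tgt S" by (simp add: conn_rel_def)
  then show ?thesis unfolding croot_def by (rule someI)
qed

lemma root_eq: assumes "(i,j) \<in> conn_rel src tgt S" shows "croot src tgt S i = croot src tgt S j"
proof -
  have "\<And>k. (i,k) \<in> conn_rel src tgt S \<longleftrightarrow> (j,k) \<in> conn_rel src tgt S"
    using assms conn_equiv[of src tgt S] unfolding equiv_def sym_def trans_def by blast
  then have "(\<lambda>k. (i,k) \<in> conn_rel src tgt S) = (\<lambda>k. (j,k) \<in> conn_rel src tgt S)" by blast
  then show ?thesis unfolding croot_def by (rule arg_cong[where f=Eps])
qed

lemma root_root: "croot src tgt S (croot src tgt S i) = croot src tgt S i"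
  using root_eq[OF root_rel] by metis

lemma components_alt: "components src tgt S = {conn_rel src tgt S `` {x} | x. True}"
  unfolding components_def quotient_def by blast

lemma card_roots: "card {i::'n::finite. croot src tgt S i = i} = ncomp src tgt S"
proof -
  let ?R = "conn_rel src tgt S"
  have "bij_betw (\<lambda>i. ?R `` {i}) {i. croot src tgt S i = i} (components src tgt S)"
  proof (rule bij_betwI')
    fix x y assume "x \<in> {i. croot src tgt S i = i}" "y \<in> {i. croot src tgt S i = i}"
    then have rx: "croot src tgt S x = x" and ry: "croot src tgt S y = y" by auto
    show "(?R `` {x} = ?R `` {y}) = (x = y)"
    proof
      assume "?R `` {x} = ?R `` {y}"
      then have "(x,y) \<in> ?R" by (simp add: equiv_class_eq_iff[OF conn_equiv])
      then have "croot src tgt S x = croot src tgt S y" by (rule root_eq)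
      then show "x = y" using rx ry by simp
    qed simp
  next
    fix x show "?R `` {x} \<in> components src tgt S" unfolding components_alt by blast
  next
    fix C assume "C \<in> components src tgt S"
    then obtain x where C: "C = ?R `` {x}" unfolding components_alt by blast
    have "?R `` {x} = ?R `` {croot src tgt S x}"
      using conn_equiv[of src tgt S] root_rel[of x src tgt S] by (simp add: equiv_class_eq)
    then show "\<exists>x\<in>{i. croot src tgt S i = i}. C = ?R `` {x}" using C root_root[of src tgt S x]
      by (intro bexI[of _ "croot src tgt S x"]) auto
  qed
  then show ?thesis unfolding ncomp_def by (simp add: bij_betw_same_card)
qed

lemma card_nonroots: "card {i::'n::finite. croot src tgt S i \<noteq> i} = CARD('n) - ncomp src tgt S"
proof -
  have "{i::'n. croot src tgt S i \<noteq> i} = UNIV - {i. croot src tgt S i = i}" by blast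
  then show ?thesis using card_roots[of src tgt S] by (simp add: card_Diff_subset)
qed

lemma ncomp_le: fixes src :: "'e \<Rightarrow> 'n::finite" shows "ncomp src tgt S \<le> CARD('n)"
  using card_roots[of src tgt S] by (metis card_mono finite subset_UNIV)



lemma simple_path:
  assumes "(x,y) \<in> R\<^sup>*"
  shows "\<exists>vs. vs \<noteq> [] \<and> hd vs = x \<and> last vs = y \<and> distinct vs \<and>
           (\<forall>i. Suc i < length vs \<longrightarrow> (vs!i, vs!Suc i) \<in> R)"
  using assms
proof (induction rule: rtrancl_induct)
  case base
  then show ?case by (rule exI[of _ "[x]"]) simp
next
  case (step y z)
  then obtain vs where vs: "vs \<noteq> []" "hd vs = x" "last vs = y" "distinct vs"
    "\<forall>i. Suc i < length vs \<longrightarrow> (vs!i, vs!Suc i) \<in> R" by blast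
  show ?case
  proof (cases "z \<in> set vs")
    case True
    then obtain j where j: "j < length vs" "vs!j = z" by (meson in_set_conv_nth)
    let ?ws = "take (Suc j) vs"
    have "?ws \<noteq> []" using vs(1) by simp
    moreover have "hd ?ws = x" using vs(1,2) by simp
    moreover have "last ?ws = z" using j by (simp add: take_Suc_conv_app_nth)
    moreover have "distinct ?ws" using vs(4) by simp
    moreover have "\<forall>i. Suc i < length ?ws \<longrightarrow> (?ws!i, ?ws!Suc i) \<in> R" using vs(5) by simp
    ultimately show ?thesis by blast
  next
    case False
    let ?ws = "vs @ [z]"
    have "\<forall>i. Suc i < length ?ws \<longrightarrow> (?ws!i, ?ws!Suc i) \<in> R"
    proof (intro allI impI)
      fix i assume i: "Suc i < length ?ws"
      show "(?ws!i, ?ws!Suc i) \<in> R"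
      proof (cases "Suc i < length vs")
        case True then show ?thesis using vs(5) by (simp add: nth_append)
      next
        case False
        then have "i = length vs - 1" using i by simp
        then show ?thesis using vs(1,3) step(2) False i
          by (simp add: nth_append last_conv_nth)
      qed
    qed
    then show ?thesis using vs False by (intro exI[of _ ?ws]) simp
  qed
qed

lemma og_pot:
  assumes "phi e = p (src e) - p (tgt e)" "{src e, tgt e} = {u, v}"
  shows "oriented_gain src tgt phi e u v = p u - p v"
  using assms unfolding oriented_gain_def by (auto simp: doubleton_eq_iff)

lemma cyc_sum:
  assumes "0 < (k::nat)" shows "(\<Sum>i<k. g i - g ((i+1) mod k)) = (0::real)"
proof -
  obtain m where k: "k = Suc m" using assms by (cases k) auto
  have "(\<Sum>i<m. g i - g ((i+1) mod k)) = (\<Sum>i<m. g i - g (Suc i))"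
    by (rule sum.cong) (auto simp: k)
  also have "\<dots> = g 0 - g m" by (rule sum_lessThan_telescope')
  finally show ?thesis by (simp add: k)
qed

lemma pot_bal:
  assumes "\<And>e. e \<in> S \<Longrightarrow> phi e = p (src e) - p (tgt e)"
  shows "balanced src tgt phi S"
  unfolding balanced_def
proof (intro allI impI)
  fix vs es assume c: "is_circle src tgt S vs es"
  let ?k = "length es"
  have "(\<Sum>i<?k. oriented_gain src tgt phi (es!i) (vs!i) (vs!((i+1) mod length vs)))
      = (\<Sum>i<?k. p (vs!i) - p (vs!((i+1) mod ?k)))"
  proof (rule sum.cong)
    fix i assume "i \<in> {..<?k}"
    then have "es!i \<in> S" "{src (es!i), tgt (es!i)} = {vs!i, vs!((i+1) mod length vs)}"
      using c unfolding is_circle_def by auto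
    then show "oriented_gain src tgt phi (es!i) (vs!i) (vs!((i+1) mod length vs)) =
      p (vs!i) - p (vs!((i+1) mod ?k))"
      using og_pot[of phi "es!i" p src tgt] assms[of "es!i"] c unfolding is_circle_def by auto
  qed simp
  also have "\<dots> = 0" using c unfolding is_circle_def by (intro cyc_sum) auto
  finally show "(\<Sum>i<?k. oriented_gain src tgt phi (es!i) (vs!i) (vs!((i+1) mod length vs))) = 0" .
qed

lemma bal_mono: "balanced src tgt phi T \<Longrightarrow> S \<subseteq> T \<Longrightarrow> balanced src tgt phi S"
  unfolding balanced_def is_circle_def by blast



lemma bal_pot:
  assumes "finite S" "\<And>e. e \<in> S \<Longrightarrow> src e \<noteq> tgt e" "balanced src tgt phi S"
  shows "\<exists>p. \<forall>e\<in>S. phi e = p (src e) - p (tgt e)"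
  using assms
proof (induction S rule: finite_induct)
  case empty then show ?case by simp
next
  case (insert e F)
  have "balanced src tgt phi F" using insert(5) by (rule bal_mono) blast
  then obtain p where p: "\<And>f. f \<in> F \<Longrightarrow> phi f = p (src f) - p (tgt f)"
    using insert by blast
  define a where "a = src e"
  define b where "b = tgt e"
  have ab: "a \<noteq> b" using insert(4) a_def b_def by blast
  let ?C = "conn_rel src tgt F"
  have eqv: "equiv UNIV ?C" by (rule conn_equiv)
  show ?case
  proof (cases "(a,b) \<in> ?C")
    case False
    define d where "d = p a - p b - phi e"
    define p' where "p' = (\<lambda>v. if (b,v) \<in> ?C then p v + d else p v)"
    have ba: "(b,a) \<notin> ?C" using False eqv unfolding equiv_def sym_def by blast
    have bb: "(b,b) \<in> ?C" using eqv unfolding equiv_def refl_on_def by blast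
    have "phi e = p' a - p' b" using ba bb unfolding p'_def d_def a_def b_def by simp
    moreover have "phi f = p' (src f) - p' (tgt f)" if f: "f \<in> F" for f
    proof -
      have "(src f, tgt f) \<in> ?C" "(tgt f, src f) \<in> ?C" using f by (auto intro: conn_edge)
      then have "(b, src f) \<in> ?C \<longleftrightarrow> (b, tgt f) \<in> ?C"
        using eqv unfolding equiv_def trans_def by blast
      then show ?thesis using p[OF f] unfolding p'_def by auto
    qed
    ultimately show ?thesis unfolding a_def b_def by auto
  next
    case True
    then have "(b,a) \<in> ?C" using eqv unfolding equiv_def sym_def by blast
    let ?R = "{(src e, tgt e) | e. e \<in> F} \<union> {(tgt e, src e) | e. e \<in> F}"
    have "(b,a) \<in> ?R\<^sup>*" using \<open>(b,a) \<in> ?C\<close> unfolding conn_rel_def .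
    from simple_path[OF this] obtain vs where vs0': "vs \<noteq> [] \<and> hd vs = b \<and> last vs = a \<and> distinct vs \<and>
      (\<forall>i. Suc i < length vs \<longrightarrow> (vs!i, vs!Suc i) \<in> ?R)" ..
    have vs: "vs \<noteq> []" "hd vs = b" "last vs = a" "distinct vs"
      "\<And>i. Suc i < length vs \<Longrightarrow> (vs!i, vs!Suc i) \<in> ?R"
      using vs0' by simp_all
    define k where "k = length vs - 1"
    have lvs: "length vs = Suc k" using vs(1) unfolding k_def by (cases vs) auto
    have vs0: "vs!0 = b" using vs(1,2) by (simp add: hd_conv_nth)
    have vsk: "vs!k = a" using vs(1,3) by (simp add: last_conv_nth k_def)
    have k0: "0 < k" using vs0 vsk ab by (cases k) auto
    have ex: "\<exists>f. f \<in> F \<and> {src f, tgt f} = {vs!i, vs!Suc i}" if "i < k" for i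
    proof -
      have "(vs!i, vs!Suc i) \<in> ?R" using vs(5)[of i] that lvs by simp
      then obtain f where "f \<in> F" "(vs!i, vs!Suc i) = (src f, tgt f) \<or> (vs!i, vs!Suc i) = (tgt f, src f)"
        by blast
      then show ?thesis by (intro exI[of _ f]) auto
    qed
    define es' where "es' = map (\<lambda>i. SOME f. f \<in> F \<and> {src f, tgt f} = {vs!i, vs!Suc i}) [0..<k]"
    have es'i: "es'!i \<in> F \<and> {src (es'!i), tgt (es'!i)} = {vs!i, vs!Suc i}" if "i < k" for i
      using someI_ex[OF ex[OF that]] that unfolding es'_def by simp
    have les': "length es' = k" unfolding es'_def by simp
    have dist': "distinct es'"
      unfolding distinct_conv_nth les'
    proof (intro allI impI)
      fix i j assume ij: "i < k" "j < k" "i \<noteq> j"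
      show "es'!i \<noteq> es'!j"
      proof
        assume "es'!i = es'!j"
        then have "{vs!i, vs!Suc i} = {vs!j, vs!Suc j}" using es'i[OF ij(1)] es'i[OF ij(2)] by simp
        then have "(vs!i = vs!j \<and> vs!Suc i = vs!Suc j) \<or> (vs!i = vs!Suc j \<and> vs!Suc i = vs!j)"
          by (simp add: doubleton_eq_iff)
        moreover have "i < length vs" "j < length vs" "Suc i < length vs" "Suc j < length vs"
          using ij lvs by auto
        ultimately have "i = j \<or> (i = Suc j \<and> Suc i = j)"
          using vs(4) by (simp add: nth_eq_iff_index_eq)
        then show False using ij(3) by linarith
      qed
    qed
    define es where "es = es' @ [e]"
    have les: "length es = Suc k" unfolding es_def using les' by simp
    have esi: "es!i = es'!i" if "i < k" for i unfolding es_def using that les' by (simp add: nth_append)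
    have esk: "es!k = e" unfolding es_def using les' by (simp add: nth_append)
    have circ: "is_circle src tgt (insert e F) vs es"
      unfolding is_circle_def
    proof (intro conjI allI impI)
      show "length vs = length es" using les lvs by simp
      show "2 \<le> length es" using les k0 by simp
      show "distinct vs" by fact
      have "set es' \<subseteq> F"
      proof
        fix f assume "f \<in> set es'"
        then obtain i where "i < length es'" "es'!i = f" by (auto simp: in_set_conv_nth)
        then show "f \<in> F" using es'i les' by auto
      qed
      then show "distinct es" unfolding es_def using dist' insert(2) by auto
      show "set es \<subseteq> insert e F" unfolding es_def using \<open>set es' \<subseteq> F\<close> by auto
      fix i assume i: "i < length es"
      show "{src (es!i), tgt (es!i)} = {vs!i, vs!((i+1) mod length vs)}"
      proof (cases "i < k")
        case True then show ?thesis using esi es'i lvs by simp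
      next
        case False
        then have "i = k" using i les by simp
        then show ?thesis using esk vs0 vsk lvs by (simp add: a_def b_def)
      qed
    qed
    have "(\<Sum>i<length es. oriented_gain src tgt phi (es!i) (vs!i) (vs!((i+1) mod length vs))) = 0"
      using insert(5)[unfolded balanced_def, rule_format, OF circ] .
    moreover have "(\<Sum>i<length es. oriented_gain src tgt phi (es!i) (vs!i) (vs!((i+1) mod length vs)))
       = (\<Sum>i<k. p (vs!i) - p (vs!Suc i)) + phi e"
    proof -
      have "(\<Sum>i<k. oriented_gain src tgt phi (es!i) (vs!i) (vs!((i+1) mod length vs)))
          = (\<Sum>i<k. p (vs!i) - p (vs!Suc i))"
      proof (rule sum.cong)
        fix i assume "i \<in> {..<k}"
        then have i: "i < k" by simp
        then show "oriented_gain src tgt phi (es!i) (vs!i) (vs!((i+1) mod length vs)) = p (vs!i) - p (vs!Suc i)"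
          using og_pot[of phi "es'!i" p src tgt "vs!i" "vs!Suc i"] p[of "es'!i"] es'i[OF i] esi[OF i] lvs by simp
      qed simp
      moreover have "oriented_gain src tgt phi (es!k) (vs!k) (vs!((k+1) mod length vs)) = phi e"
        using esk vsk vs0 lvs unfolding oriented_gain_def a_def b_def by simp
      ultimately show ?thesis using les by simp
    qed
    moreover have "(\<Sum>i<k. p (vs!i) - p (vs!Suc i)) = p b - p a"
      using sum_lessThan_telescope'[of "\<lambda>i. p (vs!i)" k] vs0 vsk by simp
    ultimately have "phi e = p a - p b" by simp
    then show ?thesis using p unfolding a_def b_def by auto
  qed
qed



definition lin_indep :: "('i \<Rightarrow> 'b::real_vector) \<Rightarrow> 'i set \<Rightarrow> bool" where
  "lin_indep v K \<longleftrightarrow> (\<forall>c. (\<Sum>i\<in>K. c i *\<^sub>R v i) = 0 \<longrightarrow> (\<forall>i\<in>K. c i = 0))"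

lemma lin_indep_cong: "(\<And>i. i \<in> K \<Longrightarrow> v i = w i) \<Longrightarrow> lin_indep v K = lin_indep w K"
  unfolding lin_indep_def by (metis (no_types, lifting) sum.cong)

lemma lin_indep_inj:
  assumes "finite K" "lin_indep v K" shows "inj_on v K"
proof (rule inj_onI, rule ccontr)
  fix i j assume ij: "i \<in> K" "j \<in> K" "v i = v j" "i \<noteq> j"
  define c where "c = (\<lambda>l. if l = i then 1 else if l = j then -1 else (0::real))"
  have s1: "(\<Sum>l\<in>K. c l *\<^sub>R v l) = c i *\<^sub>R v i + (\<Sum>l\<in>K-{i}. c l *\<^sub>R v l)"
    using sum.remove[OF assms(1) ij(1)] .
  have s2: "(\<Sum>l\<in>K-{i}. c l *\<^sub>R v l) = c j *\<^sub>R v j + (\<Sum>l\<in>K-{i}-{j}. c l *\<^sub>R v l)"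
    using sum.remove[of "K-{i}" j "\<lambda>l. c l *\<^sub>R v l"] ij assms(1) by simp
  have s3: "(\<Sum>l\<in>K-{i}-{j}. c l *\<^sub>R v l) = 0" by (rule sum.neutral) (simp add: c_def)
  have ci: "c i = 1" "c j = -1" using ij(4) by (simp_all add: c_def)
  have "(\<Sum>l\<in>K. c l *\<^sub>R v l) = 0" unfolding s1 s2 s3 ci using ij(3) by simp
  then have "c i = 0" using assms(2) ij(1) unfolding lin_indep_def by blast
  then show False using ci by simp
qed

lemma lin_indep_independent:
  assumes "finite K" "lin_indep v K" shows "independent (v ` K)"
proof
  assume "dependent (v ` K)"
  then obtain u where u: "\<exists>w\<in>v ` K. u w \<noteq> 0" "(\<Sum>w\<in>v ` K. u w *\<^sub>R w) = 0"
    using dependent_finite[of "v ` K"] assms(1) by auto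
  have "(\<Sum>i\<in>K. u (v i) *\<^sub>R v i) = 0"
    using u(2) sum.reindex[OF lin_indep_inj[OF assms], of "\<lambda>w. u w *\<^sub>R w"] by simp
  then show False using assms(2) u(1) unfolding lin_indep_def by auto
qed

lemma lin_indep_card:
  fixes v :: "'i \<Rightarrow> 'b::euclidean_space"
  assumes "finite K" "lin_indep v K" shows "card K \<le> DIM('b)"
proof -
  have "card (v ` K) \<le> DIM('b)"
    using independent_card_le_dim[OF _ lin_indep_independent[OF assms]] by (metis dim_UNIV subset_UNIV)
  then show ?thesis using card_image[OF lin_indep_inj[OF assms]] by simp
qed

lemma lin_indep_span:
  fixes v :: "'i \<Rightarrow> 'b::euclidean_space"
  assumes "finite K" "lin_indep v K" "card K = DIM('b)" shows "span (v ` K) = UNIV"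
proof -
  have "dim (UNIV::'b set) \<le> card (v ` K)" using card_image[OF lin_indep_inj[OF assms(1,2)]] assms(3) by simp
  then show ?thesis using card_ge_dim_independent[OF _ lin_indep_independent[OF assms(1,2)]]
    by (metis subset_UNIV top.extremum_uniqueI)
qed

lemma lin_indep_insert:
  assumes "finite K" "k \<notin> K" "lin_indep v K" "v k \<notin> span (v ` K)"
  shows "lin_indep v (insert k K)"
  unfolding lin_indep_def
proof (intro allI impI)
  fix c assume c: "(\<Sum>i\<in>insert k K. c i *\<^sub>R v i) = 0"
  then have eq: "c k *\<^sub>R v k + (\<Sum>i\<in>K. c i *\<^sub>R v i) = 0" using assms(1,2) by simp
  have ck: "c k = 0"
  proof (rule ccontr)
    assume "c k \<noteq> 0"
    have eq': "c k *\<^sub>R v k = - (\<Sum>i\<in>K. c i *\<^sub>R v i)"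
      using eq by (simp add: eq_neg_iff_add_eq_0)
    have "v k = (1 / c k) *\<^sub>R (c k *\<^sub>R v k)" using \<open>c k \<noteq> 0\<close> by simp
    also have "\<dots> = (- 1 / c k) *\<^sub>R (\<Sum>i\<in>K. c i *\<^sub>R v i)" using eq' by simp
    finally have "v k = (- 1 / c k) *\<^sub>R (\<Sum>i\<in>K. c i *\<^sub>R v i)" .
    moreover have "(\<Sum>i\<in>K. c i *\<^sub>R v i) \<in> span (v ` K)"
      by (intro span_sum span_scale span_base) auto
    ultimately show False using assms(4) by (metis span_scale)
  qed
  then have "(\<Sum>i\<in>K. c i *\<^sub>R v i) = 0" using eq by simp
  then show "\<forall>i\<in>insert k K. c i = 0" using assms(3) ck unfolding lin_indep_def by auto
qed

lemma lin_indep_single: "lin_indep v {i} \<longleftrightarrow> v i \<noteq> 0"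
  unfolding lin_indep_def by auto

lemma norm_axis: fixes x :: "'a::euclidean_space" and k :: "'n::finite"
  shows "norm (axis k x) = norm x"
proof -
  have "(norm (axis k x))\<^sup>2 = (norm x)\<^sup>2" by (simp add: power2_norm_eq_inner inner_axis_axis)
  then show ?thesis by (rule power2_eq_imp_eq) simp_all
qed



lemma open_lin_indep:
  fixes F :: "'i::finite \<Rightarrow> 'q::topological_space \<Rightarrow> 'b::euclidean_space"
  assumes cont: "\<And>i. continuous_on UNIV (F i)"
  shows "open {Q. lin_indep (\<lambda>i. F i Q) K}"
proof (rule open_subopen[THEN iffD2], intro ballI)
  fix Q0 assume "Q0 \<in> {Q. lin_indep (\<lambda>i. F i Q) K}"
  then have li: "lin_indep (\<lambda>i. F i Q0) K" by simp
  define T where "T = (\<lambda>c::real^'i. \<Sum>i\<in>K. c$i *\<^sub>R F i Q0)"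
  define s where "s = {c::real^'i. \<forall>i. i \<notin> K \<longrightarrow> c$i = 0}"
  have "linear T" unfolding T_def
    by (rule linearI) (simp_all add: sum.distrib scaleR_add_left scaleR_sum_right)
  then have bl: "bounded_linear T" by (simp add: linear_conv_bounded_linear)
  have ss: "subspace s" unfolding s_def subspace_def by auto
  then have cs: "closed s" by (rule closed_subspace)
  have inj: "\<forall>c\<in>s. T c = 0 \<longrightarrow> c = 0"
  proof (intro ballI impI)
    fix c assume c: "c \<in> s" "T c = 0"
    then have "\<forall>i\<in>K. c$i = 0" using li unfolding lin_indep_def T_def by blast
    show "c = 0" unfolding vec_eq_iff
    proof
      fix i show "c$i = 0$i" using c(1) \<open>\<forall>i\<in>K. c$i = 0\<close> by (cases "i \<in> K") (auto simp: s_def)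
    qed
  qed
  obtain e where e: "e > 0" "\<And>c. c \<in> s \<Longrightarrow> e * norm c \<le> norm (T c)"
    using injective_imp_isometric[OF cs ss bl inj] by blast
  define U where "U = {Q. (\<Sum>i\<in>K. norm (F i Q - F i Q0)) < e}"
  have "open U" unfolding U_def
    by (intro open_Collect_less continuous_intros cont)
  moreover have "Q0 \<in> U" using e unfolding U_def by simp
  moreover have "U \<subseteq> {Q. lin_indep (\<lambda>i. F i Q) K}"
  proof
    fix Q assume "Q \<in> U"
    then have QU: "(\<Sum>i\<in>K. norm (F i Q - F i Q0)) < e" unfolding U_def by simp
    have "lin_indep (\<lambda>i. F i Q) K" unfolding lin_indep_def
    proof (intro allI impI)
      fix c assume c: "(\<Sum>i\<in>K. c i *\<^sub>R F i Q) = 0"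
      define cv where "cv = (\<chi> i. if i \<in> K then c i else 0)"
      have cvs: "cv \<in> s" unfolding cv_def s_def by simp
      have "T cv = (\<Sum>i\<in>K. c i *\<^sub>R F i Q0)" unfolding T_def cv_def by simp
      also have "\<dots> = (\<Sum>i\<in>K. c i *\<^sub>R F i Q0) - (\<Sum>i\<in>K. c i *\<^sub>R F i Q)" using c by simp
      also have "\<dots> = (\<Sum>i\<in>K. c i *\<^sub>R (F i Q0 - F i Q))"
        by (simp add: sum_subtractf scaleR_diff_right)
      finally have Tcv: "T cv = (\<Sum>i\<in>K. c i *\<^sub>R (F i Q0 - F i Q))" .
      have "norm (T cv) \<le> (\<Sum>i\<in>K. norm cv * norm (F i Q - F i Q0))"
        unfolding Tcv
      proof (rule sum_norm_le)
        fix i assume "i \<in> K"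
        then have "\<bar>c i\<bar> \<le> norm cv" using component_le_norm_cart[of cv i] unfolding cv_def by simp
        then show "norm (c i *\<^sub>R (F i Q0 - F i Q)) \<le> norm cv * norm (F i Q - F i Q0)"
          by (simp add: norm_minus_commute mult_right_mono)
      qed
      also have "\<dots> = norm cv * (\<Sum>i\<in>K. norm (F i Q - F i Q0))" by (simp add: sum_distrib_left)
      finally have "e * norm cv \<le> norm cv * (\<Sum>i\<in>K. norm (F i Q - F i Q0))"
        using e(2)[OF cvs] by linarith
      then have "norm cv = 0"
      proof (rule contrapos_pp)
        assume "norm cv \<noteq> 0"
        then have "norm cv > 0" by simp
        then have "norm cv * (\<Sum>i\<in>K. norm (F i Q - F i Q0)) < norm cv * e" using QU by simp
        then show "\<not> e * norm cv \<le> norm cv * (\<Sum>i\<in>K. norm (F i Q - F i Q0))" by (simp add: mult.commute)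
      qed
      then have "cv = 0" by simp
      show "\<forall>i\<in>K. c i = 0"
      proof
        fix i assume i: "i \<in> K"
        have "cv$i = 0" using \<open>cv = 0\<close> by simp
        then show "c i = 0" using i unfolding cv_def by simp
      qed
    qed
    then show "Q \<in> {Q. lin_indep (\<lambda>i. F i Q) K}" by simp
  qed
  ultimately show "\<exists>T. open T \<and> Q0 \<in> T \<and> T \<subseteq> {Q. lin_indep (\<lambda>i. F i Q) K}" by blast
qed



lemma dense_lin_indep:
  fixes F :: "'n::finite \<Rightarrow> ('a::euclidean_space)^'n \<Rightarrow> 'b::euclidean_space"
  assumes upd: "\<And>i j Q x. i \<in> K \<Longrightarrow> j \<in> K \<Longrightarrow> j \<noteq> i \<Longrightarrow> F i (Q + axis j x) = F i Q"
    and esc: "\<And>i Q V r. i \<in> K \<Longrightarrow> finite V \<Longrightarrow> card V < card K \<Longrightarrow> 0 < r \<Longrightarrow>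
                 \<exists>x. norm x < r \<and> F i (Q + axis i x) \<notin> span V"
    and "0 < \<epsilon>"
  shows "\<exists>Q. dist Q Q0 < \<epsilon> \<and> lin_indep (\<lambda>i. F i Q) K"
proof -
  have "\<forall>Q0 \<epsilon>. 0 < \<epsilon> \<longrightarrow> (\<exists>Q. dist Q Q0 < \<epsilon> \<and> lin_indep (\<lambda>i. F i Q) K')"
    if "K' \<subseteq> K" for K'
  proof -
    have "finite K'" by simp
    then show ?thesis using that
    proof (induction K' rule: finite_induct)
      case empty
      show ?case
      proof (intro allI impI)
        fix Q0 :: "'a^'n" and \<epsilon> :: real assume "0 < \<epsilon>"
        then show "\<exists>Q. dist Q Q0 < \<epsilon> \<and> lin_indep (\<lambda>i. F i Q) {}"
          by (intro exI[of _ Q0]) (simp add: lin_indep_def)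
      qed
    next
      case (insert k K'')
      show ?case
      proof (intro allI impI)
        fix Q0 :: "'a^'n" and \<epsilon> :: real assume \<epsilon>: "0 < \<epsilon>"
        have "K'' \<subseteq> K" using insert(4) by simp
        then have IH: "\<forall>Q0 \<epsilon>. 0 < \<epsilon> \<longrightarrow> (\<exists>Q. dist Q Q0 < \<epsilon> \<and> lin_indep (\<lambda>i. F i Q) K'')"
          using insert(3) by blast
        have "0 < \<epsilon>/2" using \<epsilon> by simp
        then obtain Q1 where Q1: "dist Q1 Q0 < \<epsilon>/2" "lin_indep (\<lambda>i. F i Q1) K''"
          using IH[rule_format, of "\<epsilon>/2" Q0] by blast
        let ?V = "(\<lambda>i. F i Q1) ` K''"
        have "card (insert k K'') \<le> card K" using insert(4) by (simp add: card_mono)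
        then have "card ?V < card K" using insert(1,2) card_image_le[of K'' "\<lambda>i. F i Q1"] by simp
        then obtain x where x: "norm x < \<epsilon>/2" "F k (Q1 + axis k x) \<notin> span ?V"
          using esc[of k ?V "\<epsilon>/2" Q1] insert(4) \<epsilon> by auto
        define Q where "Q = Q1 + axis k x"
        have same: "F i Q = F i Q1" if "i \<in> K''" for i
          unfolding Q_def using upd[of i k Q1 x] that insert(2,4) by auto
        have "lin_indep (\<lambda>i. F i Q) K''" using Q1(2) lin_indep_cong[of K'' "\<lambda>i. F i Q" "\<lambda>i. F i Q1"] same by simp
        moreover have "(\<lambda>i. F i Q) ` K'' = ?V" using same by auto
        ultimately have "lin_indep (\<lambda>i. F i Q) (insert k K'')"
          using lin_indep_insert[of K'' k "\<lambda>i. F i Q"] insert(1,2) x(2) unfolding Q_def by simp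
        moreover have "dist Q Q0 < \<epsilon>"
        proof -
          have "dist Q Q1 = norm x" unfolding Q_def by (simp add: dist_norm norm_axis)
          then show ?thesis using dist_triangle[of Q Q0 Q1] Q1(1) x(1) by linarith
        qed
        ultimately show "\<exists>Q. dist Q Q0 < \<epsilon> \<and> lin_indep (\<lambda>i. F i Q) (insert k K'')" by blast
      qed
    qed
  qed
  then show ?thesis using assms(3) by blast
qed

lemma esc1:
  fixes y0 :: "'a::euclidean_space"
  assumes "finite V" "card V < DIM('a)" "0 < r"
  shows "\<exists>x. norm x < r \<and> y0 + x \<notin> span V"
proof -
  have "dim V < DIM('a)" using dim_le_card[of V V] assms(1,2) span_superset by fastforce
  then obtain u where u: "u \<noteq> 0" "\<And>y. y \<in> span V \<Longrightarrow> orthogonal u y"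
    using orthogonal_to_subspace_exists by blast
  show ?thesis
  proof (cases "y0 \<in> span V")
    case False then show ?thesis using assms(3) by (intro exI[of _ 0]) simp
  next
    case True
    define x where "x = (r / (2 * norm u)) *\<^sub>R u"
    have nx: "norm x < r" using u(1) assms(3) unfolding x_def by simp
    have "y0 + x \<notin> span V"
    proof
      assume "y0 + x \<in> span V"
      then have "x \<in> span V" using True span_add_eq by blast
      then have "inner u x = 0" using u(2) unfolding orthogonal_def by blast
      then have "(r / (2 * norm u)) * inner u u = 0" unfolding x_def by simp
      then show False using u(1) assms(3) by simp
    qed
    then show ?thesis using nx by blast
  qed
qed

lemma esc2:
  fixes y0 q :: "'a::euclidean_space" and V :: "('a \<times> real) set"
  assumes "finite V" "card V < DIM('a) + 1" "0 < r"
  shows "\<exists>x. norm x < r \<and> (y0 + x, (norm (q + x))\<^sup>2 - C) \<notin> span V"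
proof (rule ccontr)
  assume "\<not> ?thesis"
  then have all: "\<And>x. norm x < r \<Longrightarrow> (y0 + x, (norm (q + x))\<^sup>2 - C) \<in> span V" by blast
  have "dim V < DIM('a \<times> real)" using dim_le_card[of V V] assms(1,2) span_superset by fastforce
  then obtain z where z: "z \<noteq> 0" "\<And>y. y \<in> span V \<Longrightarrow> orthogonal z y"
    using orthogonal_to_subspace_exists by blast
  obtain u s where us: "z = (u, s)" by (cases z)
  define g where "g = (\<lambda>x. inner u (y0 + x) + s * ((norm (q + x))\<^sup>2 - C))"
  have g0: "g x = 0" if "norm x < r" for x
    using z(2)[OF all[OF that]] unfolding orthogonal_def us g_def by simp
  have gexp: "g x = inner u y0 + inner u x + s * (inner q q + 2 * inner q x + inner x x - C)" for x
    unfolding g_def by (simp add: power2_norm_eq_inner inner_add_left inner_add_right inner_commute)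
  obtain b :: 'a where b: "b \<in> Basis" using nonempty_Basis by blast
  define w where "w = (if u \<noteq> 0 then u else b)"
  have w0: "w \<noteq> 0" unfolding w_def using b by (auto simp: nonzero_Basis)
  define t where "t = r / (2 * norm w)"
  have t0: "t > 0" unfolding t_def using w0 assms(3) by simp
  have nt: "norm (t *\<^sub>R w) < r" "norm (- (t *\<^sub>R w)) < r" "norm (0::'a) < r"
    unfolding t_def using w0 assms(3) by auto
  have e1: "g (t *\<^sub>R w) = 0" "g (- (t *\<^sub>R w)) = 0" "g 0 = 0" using g0 nt by auto
  have "g (t *\<^sub>R w) + g (- (t *\<^sub>R w)) - 2 * g 0 = 2 * s * t * t * inner w w"
    unfolding gexp by (simp add: algebra_simps)
  then have "s * (t * t * inner w w) = 0" using e1 by simp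
  then have s0: "s = 0" using t0 w0 by simp
  have "g (t *\<^sub>R w) - g 0 = t * inner u w" unfolding gexp s0 by simp
  then have "inner u w = 0" using e1 t0 by simp
  then have "u = 0" unfolding w_def by (auto split: if_splits)
  then show False using z(1) s0 us by (simp add: zero_prod_def)
qed



lemma lin_indep_not_span:
  fixes a :: "'i \<Rightarrow> 'a::euclidean_space"
  assumes "finite N" "lin_indep a N" "j \<in> N"
  shows "a j \<notin> span (a ` (N - {j}))"
proof
  assume "a j \<in> span (a ` (N - {j}))"
  moreover have "a ` (N - {j}) = a ` N - {a j}"
    using lin_indep_inj[OF assms(1,2)] assms(3) by (auto simp: inj_on_def)
  ultimately have "dependent (a ` N)" unfolding dependent_def using assms(3) by auto
  then show False using lin_indep_independent[OF assms(1,2)] by simp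
qed

lemma dual_vec:
  fixes a :: "'i \<Rightarrow> 'a::euclidean_space"
  assumes "finite N" "lin_indep a N" "j \<in> N"
  shows "\<exists>e. \<forall>i\<in>N. inner (a i) e = (if i = j then 1 else 0)"
proof -
  obtain y z where yz: "y \<in> span (a ` (N - {j}))" "\<And>w. w \<in> span (a ` (N - {j})) \<Longrightarrow> orthogonal z w"
    "a j = y + z"
    using orthogonal_subspace_decomp_exists[of "a ` (N - {j})" "a j"] by blast
  have z0: "z \<noteq> 0" using yz lin_indep_not_span[OF assms] by auto
  have yz0: "inner y z = 0" using yz(2)[OF yz(1)] unfolding orthogonal_def by (simp add: inner_commute)
  have "inner (a j) z = inner z z" using yz0 by (simp add: yz(3) inner_add_left)
  then have aj: "inner (a j) (z /\<^sub>R inner z z) = 1" using z0 by simp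
  have "inner (a i) (z /\<^sub>R inner z z) = 0" if "i \<in> N" "i \<noteq> j" for i
  proof -
    have "a i \<in> span (a ` (N - {j}))" using that by (intro span_base) auto
    then have "inner z (a i) = 0" using yz(2) unfolding orthogonal_def by blast
    then show ?thesis by (simp add: inner_commute)
  qed
  then show ?thesis using aj by (intro exI[of _ "z /\<^sub>R inner z z"]) auto
qed

lemma linsys:
  fixes a :: "'i \<Rightarrow> 'a::euclidean_space" and b :: "'i \<Rightarrow> real"
  assumes "finite N" "lin_indep a N"
  shows "{P. \<forall>i\<in>N. inner (a i) P = b i} \<noteq> {}"
    and "affine {P. \<forall>i\<in>N. inner (a i) P = b i}"
    and "aff_dim {P. \<forall>i\<in>N. inner (a i) P = b i} = int (DIM('a) - card N)"
proof -
  let ?X = "{P. \<forall>i\<in>N. inner (a i) P = b i}"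
  have "\<forall>j\<in>N. \<exists>e. \<forall>i\<in>N. inner (a i) e = (if i = j then 1 else 0)"
    using dual_vec[OF assms] by blast
  from bchoice[OF this] obtain e where e': "\<forall>j\<in>N. \<forall>i\<in>N. inner (a i) (e j) = (if i = j then 1 else 0)" ..
  then have e: "\<And>j i. j \<in> N \<Longrightarrow> i \<in> N \<Longrightarrow> inner (a i) (e j) = (if i = j then 1 else 0)"
    by blast
  define P0 where "P0 = (\<Sum>j\<in>N. b j *\<^sub>R e j)"
  have P0: "P0 \<in> ?X"
  proof (simp, intro ballI)
    fix i assume i: "i \<in> N"
    have "inner (a i) P0 = (\<Sum>j\<in>N. b j * inner (a i) (e j))"
      unfolding P0_def by (simp add: inner_sum_right)
    also have "\<dots> = (\<Sum>j\<in>N. if j = i then b j else 0)"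
      by (rule sum.cong) (auto simp: e i)
    also have "\<dots> = b i" using assms(1) i by simp
    finally show "inner (a i) P0 = b i" .
  qed
  then show "?X \<noteq> {}" by blast
  have "?X = \<Inter> ((\<lambda>i. {P. inner (a i) P = b i}) ` N)" by auto
  then show "affine ?X" by (auto intro: affine_hyperplane)
  define W where "W = {v. \<forall>i\<in>N. inner (a i) v = 0}"
  have "?X = (+) P0 ` W"
  proof
    show "?X \<subseteq> (+) P0 ` W"
    proof
      fix P assume "P \<in> ?X"
      then have "P - P0 \<in> W" using P0 unfolding W_def by (simp add: inner_diff_right)
      then show "P \<in> (+) P0 ` W" by (rule rev_image_eqI) simp
    qed
    show "(+) P0 ` W \<subseteq> ?X" using P0 unfolding W_def by (auto simp: inner_add_right)
  qed
  then have "aff_dim ?X = aff_dim W" by (simp add: aff_dim_translation_eq)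
  also have "\<dots> = int (dim W)"
    by (rule aff_dim_subspace) (auto simp: W_def subspace_def inner_add_right)
  also have "dim W = DIM('a) - card N"
  proof -
    have "W = {y \<in> UNIV. \<forall>x \<in> span (a ` N). orthogonal x y}"
    proof
      show "W \<subseteq> {y \<in> UNIV. \<forall>x \<in> span (a ` N). orthogonal x y}"
      proof
        fix y assume y: "y \<in> W"
        have "\<forall>x \<in> span (a ` N). orthogonal x y"
        proof
          fix x assume x: "x \<in> span (a ` N)"
          have "orthogonal y x"
            by (rule orthogonal_to_span[OF x]) (use y in \<open>auto simp: W_def orthogonal_def inner_commute\<close>)
          then show "orthogonal x y" by (simp add: orthogonal_commute)
        qed
        then show "y \<in> {y \<in> UNIV. \<forall>x \<in> span (a ` N). orthogonal x y}" by simp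
      qed
      show "{y \<in> UNIV. \<forall>x \<in> span (a ` N). orthogonal x y} \<subseteq> W"
        unfolding W_def orthogonal_def by (auto intro: span_base)
    qed
    moreover have "dim (span (a ` N)) = card N"
      using dim_span_eq_card_independent[OF lin_indep_independent[OF assms]]
        card_image[OF lin_indep_inj[OF assms]] by simp
    ultimately show ?thesis
      using dim_subspace_orthogonal_to_vectors[of "span (a ` N)" UNIV] by simp
  qed
  finally show "aff_dim ?X = int (DIM('a) - card N)" .
qed



lemma inter_hyp_iff:
  "P \<in> inter_hyp src tgt phi Q S \<longleftrightarrow> (\<forall>e\<in>S. (dist P (Q$src e))\<^sup>2 - (dist P (Q$tgt e))\<^sup>2 = phi e)"
  unfolding inter_hyp_def hyp_def pyth_def by auto

lemma inter_hyp_Un: "inter_hyp src tgt phi Q (A \<union> B) = inter_hyp src tgt phi Q A \<inter> inter_hyp src tgt phi Q B"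
  unfolding inter_hyp_def by auto

lemma nonempty_bal:
  assumes "P \<in> inter_hyp src tgt phi Q S" shows "balanced src tgt phi S"
  by (rule pot_bal[of S phi "\<lambda>i. (dist P (Q$i))\<^sup>2"]) (use assms in \<open>simp add: inter_hyp_iff\<close>)

lemma dist_sq:
  fixes P x y :: "'a::euclidean_space"
  shows "(dist P x)\<^sup>2 - (dist P y)\<^sup>2 = (norm x)\<^sup>2 - (norm y)\<^sup>2 - 2 * inner (x - y) P"
  by (simp add: dist_norm power2_norm_eq_inner inner_diff_left inner_diff_right inner_commute algebra_simps)

lemma char0:
  assumes pot: "\<And>e. e \<in> S \<Longrightarrow> phi e = p (src e) - p (tgt e)"
  shows "P \<in> inter_hyp src tgt phi Q S \<longleftrightarrow>
    (\<forall>i j. (i,j) \<in> conn_rel src tgt S \<longrightarrow> (dist P (Q$i))\<^sup>2 - p i = (dist P (Q$j))\<^sup>2 - p j)"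
  (is "?L \<longleftrightarrow> ?R")
proof
  assume ?L
  then have "\<And>e. e \<in> S \<Longrightarrow> (\<lambda>i. (dist P (Q$i))\<^sup>2 - p i) (src e) = (\<lambda>i. (dist P (Q$i))\<^sup>2 - p i) (tgt e)"
    using pot unfolding inter_hyp_iff by fastforce
  then show ?R using conn_const[of S "\<lambda>i. (dist P (Q$i))\<^sup>2 - p i" src tgt] by blast
next
  assume R: ?R
  show ?L unfolding inter_hyp_iff
  proof
    fix e assume e: "e \<in> S"
    have "(dist P (Q$src e))\<^sup>2 - p (src e) = (dist P (Q$tgt e))\<^sup>2 - p (tgt e)"
      using R conn_edge(1)[OF e] by blast
    then show "(dist P (Q$src e))\<^sup>2 - (dist P (Q$tgt e))\<^sup>2 = phi e" using pot[OF e] by simp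
  qed
qed

lemma char:
  fixes Q :: "('a::euclidean_space)^'n::finite"
  assumes pot: "\<And>e. e \<in> S \<Longrightarrow> phi e = p (src e) - p (tgt e)"
  shows "inter_hyp src tgt phi Q S = {P. \<forall>i \<in> {i. croot src tgt S i \<noteq> i}.
     inner (Q$i - Q$(croot src tgt S i)) P =
       ((norm (Q$i))\<^sup>2 - (norm (Q$(croot src tgt S i)))\<^sup>2 - (p i - p (croot src tgt S i))) / 2}"
proof -
  let ?r = "croot src tgt S"
  let ?f = "\<lambda>P i. (dist P (Q$i))\<^sup>2 - p i"
  have key: "?f P i = ?f P (?r i) \<longleftrightarrow>
      inner (Q$i - Q$(?r i)) P = ((norm (Q$i))\<^sup>2 - (norm (Q$(?r i)))\<^sup>2 - (p i - p (?r i))) / 2" for P i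
    using dist_sq[of P "Q$i" "Q$(?r i)"] by auto
  have A: "P \<in> inter_hyp src tgt phi Q S \<longleftrightarrow> (\<forall>i. ?f P i = ?f P (?r i))" for P
  proof -
    have "(\<forall>i j. (i,j) \<in> conn_rel src tgt S \<longrightarrow> ?f P i = ?f P j) \<longleftrightarrow> (\<forall>i. ?f P i = ?f P (?r i))"
    proof
      assume a: "\<forall>i j. (i,j) \<in> conn_rel src tgt S \<longrightarrow> ?f P i = ?f P j"
      show "\<forall>i. ?f P i = ?f P (?r i)"
      proof
        fix i
        have "(i, ?r i) \<in> conn_rel src tgt S" by (rule root_rel)
        then show "?f P i = ?f P (?r i)" using a by blast
      qed
    next
      assume a: "\<forall>i. ?f P i = ?f P (?r i)"
      show "\<forall>i j. (i,j) \<in> conn_rel src tgt S \<longrightarrow> ?f P i = ?f P j"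
      proof (intro allI impI)
        fix i j assume "(i,j) \<in> conn_rel src tgt S"
        then have "?r i = ?r j" by (rule root_eq)
        moreover have "?f P i = ?f P (?r i)" "?f P j = ?f P (?r j)" using a by blast+
        ultimately show "?f P i = ?f P j" by simp
      qed
    qed
    then show ?thesis using char0[of S phi p src tgt P Q, OF pot] by (simp only:)
  qed
  have B: "(\<forall>i. ?f P i = ?f P (?r i)) \<longleftrightarrow> (\<forall>i \<in> {i. ?r i \<noteq> i}. inner (Q$i - Q$(?r i)) P =
       ((norm (Q$i))\<^sup>2 - (norm (Q$(?r i)))\<^sup>2 - (p i - p (?r i))) / 2)" for P
  proof
    assume "\<forall>i. ?f P i = ?f P (?r i)"
    then show "\<forall>i \<in> {i. ?r i \<noteq> i}. inner (Q$i - Q$(?r i)) P =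
       ((norm (Q$i))\<^sup>2 - (norm (Q$(?r i)))\<^sup>2 - (p i - p (?r i))) / 2" using key by blast
  next
    assume a: "\<forall>i \<in> {i. ?r i \<noteq> i}. inner (Q$i - Q$(?r i)) P =
       ((norm (Q$i))\<^sup>2 - (norm (Q$(?r i)))\<^sup>2 - (p i - p (?r i))) / 2"
    show "\<forall>i. ?f P i = ?f P (?r i)"
    proof
      fix i show "?f P i = ?f P (?r i)"
      proof (cases "?r i = i")
        case True then show ?thesis by simp
      next
        case False then show ?thesis using a key by blast
      qed
    qed
  qed
  show ?thesis
  proof (rule set_eqI)
    fix P
    have "P \<in> inter_hyp src tgt phi Q S \<longleftrightarrow> (\<forall>i \<in> {i. ?r i \<noteq> i}. inner (Q$i - Q$(?r i)) P =
       ((norm (Q$i))\<^sup>2 - (norm (Q$(?r i)))\<^sup>2 - (p i - p (?r i))) / 2)"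
      using A[of P] B[of P] by (rule trans)
    then show "P \<in> inter_hyp src tgt phi Q S \<longleftrightarrow> P \<in> {P. \<forall>i \<in> {i. ?r i \<noteq> i}. inner (Q$i - Q$(?r i)) P =
       ((norm (Q$i))\<^sup>2 - (norm (Q$(?r i)))\<^sup>2 - (p i - p (?r i))) / 2}"
      by (simp only: mem_Collect_eq)
  qed
qed

lemma equiv_refine_eq:
  fixes R1 R2 :: "('n::finite \<times> 'n) set"
  assumes "equiv UNIV R1" "equiv UNIV R2" "R1 \<subseteq> R2" "card (UNIV // R1) = card (UNIV // R2)"
  shows "R1 = R2"
proof -
  let ?g = "\<lambda>C. R2 `` C"
  have r1: "(x,x) \<in> R1" for x using assms(1) unfolding equiv_def refl_on_def by blast
  have tr: "trans R2" using assms(2) unfolding equiv_def by blast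
  have g: "?g (R1 `` {x}) = R2 `` {x}" for x
  proof
    show "R2 `` (R1 `` {x}) \<subseteq> R2 `` {x}"
    proof
      fix z assume "z \<in> R2 `` (R1 `` {x})"
      then obtain y where y: "(x,y) \<in> R1" "(y,z) \<in> R2" by blast
      then have "(x,y) \<in> R2" using assms(3) by blast
      then have "(x,z) \<in> R2" using transD[OF tr _ y(2)] by blast
      then show "z \<in> R2 `` {x}" by simp
    qed
    show "R2 `` {x} \<subseteq> R2 `` (R1 `` {x})" using r1[of x] by blast
  qed
  have q: "UNIV // R = range (\<lambda>x. R `` {x})" for R :: "('n \<times> 'n) set"
    unfolding quotient_def by blast
  have img: "?g ` (UNIV // R1) = UNIV // R2"
    unfolding q image_image g by simp
  have fin: "finite (UNIV // R1)" by (rule finite_quotient) (auto simp: assms(1))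
  have "inj_on ?g (UNIV // R1)"
    by (rule eq_card_imp_inj_on[OF fin]) (simp add: img assms(4))
  have "R2 \<subseteq> R1"
  proof
    fix xy assume xy: "xy \<in> R2"
    obtain x y where xy': "xy = (x,y)" by (cases xy)
    have "R2 `` {x} = R2 `` {y}" using xy xy' equiv_class_eq[OF assms(2)] by simp
    then have "?g (R1 `` {x}) = ?g (R1 `` {y})" using g by simp
    moreover have "R1 `` {x} \<in> UNIV // R1" "R1 `` {y} \<in> UNIV // R1" by (auto intro: quotientI)
    ultimately have "R1 `` {x} = R1 `` {y}" using \<open>inj_on ?g (UNIV // R1)\<close> by (meson inj_onD)
    then show "xy \<in> R1" using xy' equiv_class_eq_iff[OF assms(1)] by simp
  qed
  then show ?thesis using assms(3) by blast
qed

definition dense_set :: "'q::metric_space set \<Rightarrow> bool" where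
  "dense_set A \<longleftrightarrow> (\<forall>x \<epsilon>. 0 < \<epsilon> \<longrightarrow> (\<exists>y\<in>A. dist y x < \<epsilon>))"


lemma od_Int:
  fixes A B :: "'q::metric_space set"
  assumes "open A" "dense_set A" "open B" "dense_set B"
  shows "open (A \<inter> B) \<and> dense_set (A \<inter> B)"
proof
  show "open (A \<inter> B)" using assms by auto
  show "dense_set (A \<inter> B)" unfolding dense_set_def
  proof (intro allI impI)
    fix x :: 'q and \<epsilon> :: real assume e: "0 < \<epsilon>"
    obtain y where y: "y \<in> A" "dist y x < \<epsilon>/2" using assms(2) e unfolding dense_set_def
      by (meson half_gt_zero)
    obtain \<delta> where d: "\<delta> > 0" "ball y \<delta> \<subseteq> A" using assms(1) y(1) open_contains_ball by blast
    have "0 < min \<delta> (\<epsilon>/2)" using d e by simp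
    then obtain z where z: "z \<in> B" "dist z y < min \<delta> (\<epsilon>/2)" using assms(4) unfolding dense_set_def by blast
    have "z \<in> A" using d z by (auto simp: dist_commute)
    moreover have "dist z x < \<epsilon>" using dist_triangle[of z x y] y z by simp
    ultimately show "\<exists>y\<in>A \<inter> B. dist y x < \<epsilon>" using z by blast
  qed
qed

lemma od_INT:
  fixes A :: "'i \<Rightarrow> 'q::metric_space set"
  assumes "finite I" "\<And>i. i \<in> I \<Longrightarrow> open (A i) \<and> dense_set (A i)"
  shows "open (\<Inter>i\<in>I. A i) \<and> dense_set (\<Inter>i\<in>I. A i)"
  using assms
proof (induction I rule: finite_induct)
  case empty
  show ?case unfolding dense_set_def
  proof (intro conjI allI impI)
    fix x :: 'q and e :: real assume "0 < e"
    then show "\<exists>y\<in>(\<Inter>i\<in>{}. A i). dist y x < e" by (intro bexI[of _ x]) auto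
  qed simp
next
  case (insert k I)
  then have "open (\<Inter>i\<in>I. A i) \<and> dense_set (\<Inter>i\<in>I. A i)" by blast
  moreover have "open (A k) \<and> dense_set (A k)" using insert by blast
  ultimately show ?case using od_Int[of "A k" "\<Inter>i\<in>I. A i"] by simp
qed

lemma dense_set_closure: "dense_set A \<Longrightarrow> closure A = UNIV"
  unfolding dense_set_def by (auto simp: closure_approachable)



lemma od1:
  fixes \<rho> :: "'n::finite \<Rightarrow> 'n" and K :: "'n set"
  assumes rho: "\<And>i. i \<in> K \<Longrightarrow> \<rho> i \<notin> K" and card: "card K \<le> DIM('a::euclidean_space)"
  shows "open {Q :: 'a^'n. lin_indep (\<lambda>i. Q$i - Q$(\<rho> i)) K} \<and>
         dense_set {Q :: 'a^'n. lin_indep (\<lambda>i. Q$i - Q$(\<rho> i)) K}"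
proof
  show "open {Q :: 'a^'n. lin_indep (\<lambda>i. Q$i - Q$(\<rho> i)) K}"
    by (rule open_lin_indep[of "\<lambda>i Q. Q$i - Q$(\<rho> i)", simplified]) (intro continuous_intros)
  show "dense_set {Q :: 'a^'n. lin_indep (\<lambda>i. Q$i - Q$(\<rho> i)) K}"
    unfolding dense_set_def
  proof (intro allI impI)
    fix x :: "'a^'n" and \<epsilon> :: real assume e: "0 < \<epsilon>"
    have "\<exists>Q. dist Q x < \<epsilon> \<and> lin_indep (\<lambda>i. Q$i - Q$(\<rho> i)) K"
    proof (rule dense_lin_indep[of K "\<lambda>i Q. Q$i - Q$(\<rho> i)", OF _ _ e])
      fix i j :: 'n and Q :: "'a^'n" and y :: 'a
      assume ij: "i \<in> K" "j \<in> K" "j \<noteq> i"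
      then have "\<rho> i \<noteq> j" using rho by blast
      then show "(Q + axis j y)$i - (Q + axis j y)$(\<rho> i) = Q$i - Q$(\<rho> i)"
        using ij by (simp add: axis_def)
    next
      fix i :: 'n and Q :: "'a^'n" and V :: "'a set" and r :: real
      assume i: "i \<in> K" and V: "finite V" "card V < card K" and r: "0 < r"
      have ri: "\<rho> i \<noteq> i" using rho[OF i] i by auto
      obtain y where y: "norm y < r" "(Q$i - Q$(\<rho> i)) + y \<notin> span V"
        using esc1[OF V(1) _ r, of "Q$i - Q$(\<rho> i)"] V(2) card by auto
      have "(Q + axis i y)$i - (Q + axis i y)$(\<rho> i) = (Q$i - Q$(\<rho> i)) + y"
        using ri by (simp add: axis_def)
      then show "\<exists>y. norm y < r \<and> (Q + axis i y)$i - (Q + axis i y)$(\<rho> i) \<notin> span V"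
        using y by metis
    qed
    then show "\<exists>y\<in>{Q. lin_indep (\<lambda>i. Q$i - Q$(\<rho> i)) K}. dist y x < \<epsilon>" by auto
  qed
qed

lemma od2:
  fixes \<rho> :: "'n::finite \<Rightarrow> 'n" and K :: "'n set" and c :: "'n \<Rightarrow> real"
  assumes rho: "\<And>i. i \<in> K \<Longrightarrow> \<rho> i \<notin> K" and card: "card K \<le> DIM('a::euclidean_space) + 1"
  shows "open {Q :: 'a^'n. lin_indep (\<lambda>i. (Q$i - Q$(\<rho> i), (norm (Q$i))\<^sup>2 - (norm (Q$(\<rho> i)))\<^sup>2 - c i)) K} \<and>
         dense_set {Q :: 'a^'n. lin_indep (\<lambda>i. (Q$i - Q$(\<rho> i), (norm (Q$i))\<^sup>2 - (norm (Q$(\<rho> i)))\<^sup>2 - c i)) K}"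
proof
  show "open {Q :: 'a^'n. lin_indep (\<lambda>i. (Q$i - Q$(\<rho> i), (norm (Q$i))\<^sup>2 - (norm (Q$(\<rho> i)))\<^sup>2 - c i)) K}"
    by (rule open_lin_indep[of "\<lambda>i Q. (Q$i - Q$(\<rho> i), (norm (Q$i))\<^sup>2 - (norm (Q$(\<rho> i)))\<^sup>2 - c i)", simplified])
      (intro continuous_intros)
  show "dense_set {Q :: 'a^'n. lin_indep (\<lambda>i. (Q$i - Q$(\<rho> i), (norm (Q$i))\<^sup>2 - (norm (Q$(\<rho> i)))\<^sup>2 - c i)) K}"
    unfolding dense_set_def
  proof (intro allI impI)
    fix x :: "'a^'n" and \<epsilon> :: real assume e: "0 < \<epsilon>"
    have "\<exists>Q. dist Q x < \<epsilon> \<and> lin_indep (\<lambda>i. (Q$i - Q$(\<rho> i), (norm (Q$i))\<^sup>2 - (norm (Q$(\<rho> i)))\<^sup>2 - c i)) K"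
    proof (rule dense_lin_indep[of K "\<lambda>i Q. (Q$i - Q$(\<rho> i), (norm (Q$i))\<^sup>2 - (norm (Q$(\<rho> i)))\<^sup>2 - c i)", OF _ _ e])
      fix i j :: 'n and Q :: "'a^'n" and y :: 'a
      assume ij: "i \<in> K" "j \<in> K" "j \<noteq> i"
      then have "\<rho> i \<noteq> j" using rho by blast
      then show "((Q + axis j y)$i - (Q + axis j y)$(\<rho> i),
          (norm ((Q + axis j y)$i))\<^sup>2 - (norm ((Q + axis j y)$(\<rho> i)))\<^sup>2 - c i) =
          (Q$i - Q$(\<rho> i), (norm (Q$i))\<^sup>2 - (norm (Q$(\<rho> i)))\<^sup>2 - c i)"
        using ij by (simp add: axis_def)
    next
      fix i :: 'n and Q :: "'a^'n" and V :: "('a \<times> real) set" and r :: real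
      assume i: "i \<in> K" and V: "finite V" "card V < card K" and r: "0 < r"
      have ri: "\<rho> i \<noteq> i" using rho[OF i] i by auto
      obtain y where y: "norm y < r"
        "((Q$i - Q$(\<rho> i)) + y, (norm (Q$i + y))\<^sup>2 - ((norm (Q$(\<rho> i)))\<^sup>2 + c i)) \<notin> span V"
        using esc2[OF V(1) _ r, of "Q$i - Q$(\<rho> i)" "Q$i" "(norm (Q$(\<rho> i)))\<^sup>2 + c i"] V(2) card by auto
      have "((Q + axis i y)$i - (Q + axis i y)$(\<rho> i),
          (norm ((Q + axis i y)$i))\<^sup>2 - (norm ((Q + axis i y)$(\<rho> i)))\<^sup>2 - c i) =
          ((Q$i - Q$(\<rho> i)) + y, (norm (Q$i + y))\<^sup>2 - ((norm (Q$(\<rho> i)))\<^sup>2 + c i))"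
        using ri by (simp add: axis_def algebra_simps)
      then show "\<exists>y. norm y < r \<and> ((Q + axis i y)$i - (Q + axis i y)$(\<rho> i),
          (norm ((Q + axis i y)$i))\<^sup>2 - (norm ((Q + axis i y)$(\<rho> i)))\<^sup>2 - c i) \<notin> span V"
        using y by metis
    qed
    then show "\<exists>y\<in>{Q. lin_indep (\<lambda>i. (Q$i - Q$(\<rho> i), (norm (Q$i))\<^sup>2 - (norm (Q$(\<rho> i)))\<^sup>2 - c i)) K}.
        dist y x < \<epsilon>" by auto
  qed
qed

lemma quot_rel:
  assumes "equiv UNIV R"
  shows "(x,y) \<in> R \<longleftrightarrow> (\<exists>C\<in>UNIV // R. x \<in> C \<and> y \<in> C)"
proof
  assume xy: "(x,y) \<in> R"
  have "(x,x) \<in> R" using assms unfolding equiv_def refl_on_def by blast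
  then show "\<exists>C\<in>UNIV // R. x \<in> C \<and> y \<in> C" using xy by (intro bexI[of _ "R `` {x}"]) (auto intro: quotientI)
next
  assume "\<exists>C\<in>UNIV // R. x \<in> C \<and> y \<in> C"
  then obtain z where "x \<in> R `` {z}" "y \<in> R `` {z}" unfolding quotient_def by blast
  then have "(z,x) \<in> R" "(z,y) \<in> R" by auto
  then show "(x,y) \<in> R" using assms unfolding equiv_def sym_def trans_def by blast
qed

lemma comp_eq_conn:
  assumes "components src tgt S1 = components src tgt S2"
  shows "conn_rel src tgt S1 = conn_rel src tgt S2"
proof -
  have "(x,y) \<in> conn_rel src tgt S1 \<longleftrightarrow> (x,y) \<in> conn_rel src tgt S2" for x y
    using quot_rel[OF conn_equiv[of src tgt S1], of x y] quot_rel[OF conn_equiv[of src tgt S2], of x y]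
      assms unfolding components_def by simp
  then show ?thesis by auto
qed


lemma charB:
  fixes Q :: "('a::euclidean_space)^'n::finite"
  assumes pot: "\<forall>e\<in>S. phi e = p (src e) - p (tgt e)"
  shows "inter_hyp src tgt phi Q S = {P. \<forall>i \<in> {i. croot src tgt S i \<noteq> i}.
     inner (Q$i - Q$(croot src tgt S i)) P =
       ((norm (Q$i))\<^sup>2 - (norm (Q$(croot src tgt S i)))\<^sup>2 - (p i - p (croot src tgt S i))) / 2}"
  by (rule char) (use pot in blast)

lemma char0B:
  assumes pot: "\<forall>e\<in>S. phi e = p (src e) - p (tgt e)"
  shows "P \<in> inter_hyp src tgt phi Q S \<longleftrightarrow>
    (\<forall>i j. (i,j) \<in> conn_rel src tgt S \<longrightarrow> (dist P (Q$i))\<^sup>2 - p i = (dist P (Q$j))\<^sup>2 - p j)"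
  by (rule char0) (use pot in blast)


theorem theorem5p1:
  fixes E :: "'e set" and src tgt :: "'e \<Rightarrow> 'n::finite" and phi :: "'e \<Rightarrow> real"
  assumes "CARD('n) > DIM('a::euclidean_space)"
    and "finite E"
    and "\<And>e. e \<in> E \<Longrightarrow> src e \<noteq> tgt e"
  shows "\<exists>G :: ('a ^ 'n) set. open G \<and> closure G = UNIV \<and> G \<subseteq> {Q. inj (($) Q)} \<and>
    (\<forall>Q\<in>G.
      (\<forall>S\<subseteq>E.
         (\<not> balanced src tgt phi S \<or> CARD('n) - ncomp src tgt S > DIM('a)
            \<longrightarrow> inter_hyp src tgt phi Q S = {}) \<and>
         (balanced src tgt phi S \<and> CARD('n) - ncomp src tgt S \<le> DIM('a)
            \<longrightarrow> inter_hyp src tgt phi Q S \<noteq> {} \<and> affine (inter_hyp src tgt phi Q S) \<and>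
                aff_dim (inter_hyp src tgt phi Q S) = int (DIM('a) - (CARD('n) - ncomp src tgt S)))) \<and>
      (\<forall>S1\<subseteq>E. \<forall>S2\<subseteq>E.
         (inter_hyp src tgt phi Q S1 = inter_hyp src tgt phi Q S2 \<and> inter_hyp src tgt phi Q S1 \<noteq> {})
         \<longleftrightarrow> (balanced src tgt phi (S1 \<union> S2) \<and> components src tgt S1 = components src tgt S2 \<and>
              ncomp src tgt S1 \<ge> CARD('n) - DIM('a))))"
proof -
  define N where "N S = {i. croot src tgt S i \<noteq> i}" for S
  define pot where "pot S = (SOME p. \<forall>e\<in>S. phi e = p (src e) - p (tgt e))" for S
  define cc where "cc S i = pot S i - pot S (croot src tgt S i)" for S i
  define KK where "KK S = (SOME K. K \<subseteq> N S \<and> card K = DIM('a) + 1)" for S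
  define F1 where "F1 S = {Q::'a^'n. lin_indep (\<lambda>i. Q$i - Q$(croot src tgt S i)) (N S)}" for S
  define F2 where "F2 S = {Q::'a^'n. lin_indep (\<lambda>i. (Q$i - Q$(croot src tgt S i),
      (norm (Q$i))\<^sup>2 - (norm (Q$(croot src tgt S i)))\<^sup>2 - cc S i)) (KK S)}" for S
  define GS where "GS S = (if card (N S) \<le> DIM('a) then F1 S
      else if balanced src tgt phi S then F2 S else UNIV)" for S
  define Ginj where "Ginj = (\<Inter>ij\<in>{ij::'n\<times>'n. fst ij \<noteq> snd ij}.
      {Q::'a^'n. lin_indep (\<lambda>k. Q$k - Q$((\<lambda>_. snd ij) k)) {fst ij}})"
  define G where "G = Ginj \<inter> (\<Inter>S\<in>Pow E. GS S)"

  have rootN: "croot src tgt S i \<notin> N S" for S i unfolding N_def using root_root by simp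
  have cardN: "card (N S) = CARD('n) - ncomp src tgt S" for S unfolding N_def by (rule card_nonroots)
  have pot_ok: "\<And>e. e \<in> S \<Longrightarrow> phi e = pot S (src e) - pot S (tgt e)"
    if "S \<subseteq> E" "balanced src tgt phi S" for S
  proof -
    have "\<exists>p. \<forall>e\<in>S. phi e = p (src e) - p (tgt e)"
      using bal_pot[of S src tgt phi] that assms(2,3) finite_subset by blast
    then have "\<forall>e\<in>S. phi e = pot S (src e) - pot S (tgt e)" unfolding pot_def by (rule someI_ex)
    then show "\<And>e. e \<in> S \<Longrightarrow> phi e = pot S (src e) - pot S (tgt e)" by blast
  qed
  have KK_ok: "KK S \<subseteq> N S \<and> card (KK S) = DIM('a) + 1" if "card (N S) > DIM('a)" for S
  proof -
    have le: "DIM('a) + 1 \<le> card (N S)" using that by simp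
    obtain K where "K \<subseteq> N S" "card K = DIM('a) + 1" "finite K"
      by (rule obtain_subset_with_card_n[OF le])
    then have "\<exists>K. K \<subseteq> N S \<and> card K = DIM('a) + 1" by blast
    then show ?thesis unfolding KK_def by (rule someI_ex)
  qed

  have odGS: "open (GS S) \<and> dense_set (GS S)" for S
  proof (cases "card (N S) \<le> DIM('a)")
    case True
    then show ?thesis unfolding GS_def F1_def
      using od1[of "N S" "croot src tgt S", where 'a='a] rootN True by simp
  next
    case False
    show ?thesis
    proof (cases "balanced src tgt phi S")
      case True
      have K: "KK S \<subseteq> N S" "card (KK S) = DIM('a) + 1" using KK_ok False by auto
      have "\<And>i. i \<in> KK S \<Longrightarrow> croot src tgt S i \<notin> KK S" using K(1) rootN by blast
      then show ?thesis unfolding GS_def F2_def using False True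
        od2[of "KK S" "croot src tgt S" "cc S", where 'a='a] K(2) by simp
    next
      case b: False
      have "dense_set (UNIV :: ('a^'n) set)" unfolding dense_set_def
      proof (intro allI impI)
        fix x :: "'a^'n" and e :: real assume "0 < e"
        then show "\<exists>y\<in>UNIV. dist y x < e" by (intro bexI[of _ x]) auto
      qed
      then show ?thesis using False b unfolding GS_def by simp
    qed
  qed
  have odInj: "open Ginj \<and> dense_set Ginj" unfolding Ginj_def
  proof (rule od_INT)
    fix ij :: "'n \<times> 'n" assume "ij \<in> {ij. fst ij \<noteq> snd ij}"
    then have "\<And>i. i \<in> {fst ij} \<Longrightarrow> (\<lambda>_. snd ij) i \<notin> {fst ij}" by auto
    moreover have "card {fst ij} \<le> DIM('a)" using DIM_positive[where 'a='a] by simp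
    ultimately show "open {Q::'a^'n. lin_indep (\<lambda>k. Q$k - Q$((\<lambda>_. snd ij) k)) {fst ij}} \<and>
        dense_set {Q::'a^'n. lin_indep (\<lambda>k. Q$k - Q$((\<lambda>_. snd ij) k)) {fst ij}}"
      by (rule od1)
  qed simp
  have odG: "open G \<and> dense_set G"
  proof -
    have "open (\<Inter>S\<in>Pow E. GS S) \<and> dense_set (\<Inter>S\<in>Pow E. GS S)"
      using od_INT[of "Pow E" GS] odGS assms(2) by simp
    then show ?thesis unfolding G_def using od_Int[of Ginj "\<Inter>S\<in>Pow E. GS S"] odInj by simp
  qed
  have Ginj_inj: "G \<subseteq> {Q. inj (($) Q)}"
  proof
    fix Q assume "Q \<in> G"
    then have QI: "Q \<in> Ginj" unfolding G_def by (rule IntD1)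
    have "inj (($) Q)"
    proof (rule injI, rule ccontr)
      fix i j assume ij: "Q$i = Q$j" "i \<noteq> j"
      then have "Q \<in> {Q::'a^'n. lin_indep (\<lambda>k. Q$k - Q$((\<lambda>_. snd (i,j)) k)) {fst (i,j)}}"
        using INT_D[OF QI[unfolded Ginj_def], of "(i,j)"] ij(2) by simp
      then have "Q$i - Q$j \<noteq> 0" by (simp add: lin_indep_single)
      then show False using ij by simp
    qed
    then show "Q \<in> {Q. inj (($) Q)}" by simp
  qed

  have main: "\<forall>Q\<in>G.
      (\<forall>S\<subseteq>E.
         (\<not> balanced src tgt phi S \<or> CARD('n) - ncomp src tgt S > DIM('a)
            \<longrightarrow> inter_hyp src tgt phi Q S = {}) \<and>
         (balanced src tgt phi S \<and> CARD('n) - ncomp src tgt S \<le> DIM('a)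
            \<longrightarrow> inter_hyp src tgt phi Q S \<noteq> {} \<and> affine (inter_hyp src tgt phi Q S) \<and>
                aff_dim (inter_hyp src tgt phi Q S) = int (DIM('a) - (CARD('n) - ncomp src tgt S)))) \<and>
      (\<forall>S1\<subseteq>E. \<forall>S2\<subseteq>E.
         (inter_hyp src tgt phi Q S1 = inter_hyp src tgt phi Q S2 \<and> inter_hyp src tgt phi Q S1 \<noteq> {})
         \<longleftrightarrow> (balanced src tgt phi (S1 \<union> S2) \<and> components src tgt S1 = components src tgt S2 \<and>
              ncomp src tgt S1 \<ge> CARD('n) - DIM('a)))"
  proof
    fix Q assume QG: "Q \<in> G"
    have QGS: "Q \<in> GS S" if "S \<subseteq> E" for S
      using INT_D[OF IntD2[OF QG[unfolded G_def]], of S] that by simp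
    have emp: "inter_hyp src tgt phi Q S = {}"
      if S: "S \<subseteq> E" and c: "\<not> balanced src tgt phi S \<or> card (N S) > DIM('a)" for S
    proof (rule ccontr)
      assume "inter_hyp src tgt phi Q S \<noteq> {}"
      then obtain P where P: "P \<in> inter_hyp src tgt phi Q S" by blast
      then have bal: "balanced src tgt phi S" by (rule nonempty_bal)
      then have big: "card (N S) > DIM('a)" using c by blast
      have QF2: "Q \<in> F2 S" using QGS[OF S] big bal unfolding GS_def by simp
      have K: "KK S \<subseteq> N S" "card (KK S) = DIM('a) + 1" using KK_ok[OF big] by auto
      have potB: "\<forall>e\<in>S. phi e = pot S (src e) - pot S (tgt e)" using pot_ok[OF S bal] by blast
      have Pc: "\<forall>i\<in>{i. croot src tgt S i \<noteq> i}. inner (Q$i - Q$(croot src tgt S i)) P =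
         ((norm (Q$i))\<^sup>2 - (norm (Q$(croot src tgt S i)))\<^sup>2 - (pot S i - pot S (croot src tgt S i))) / 2"
        using P[unfolded charB[where S=S and phi=phi and p="pot S" and src=src and tgt=tgt and Q=Q, OF potB]] by simp
      define L where "L i = (Q$i - Q$(croot src tgt S i),
        (norm (Q$i))\<^sup>2 - (norm (Q$(croot src tgt S i)))\<^sup>2 - cc S i)" for i
      have li: "lin_indep L (KK S)" using QF2 unfolding F2_def L_def by simp
      have sp: "span (L ` KK S) = UNIV"
        by (rule lin_indep_span[OF _ li]) (simp_all add: K(2))
      define z where "z = (2 *\<^sub>R P, - 1 :: real)"
      have orth: "orthogonal z y" if yK: "y \<in> L ` KK S" for y
      proof -
        obtain i where i: "i \<in> KK S" "y = L i" using yK by blast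
        then have "i \<in> {i. croot src tgt S i \<noteq> i}" using K(1) unfolding N_def by blast
        then have "inner (Q$i - Q$(croot src tgt S i)) P =
         ((norm (Q$i))\<^sup>2 - (norm (Q$(croot src tgt S i)))\<^sup>2 - (pot S i - pot S (croot src tgt S i))) / 2"
          using Pc by blast
        then show ?thesis unfolding orthogonal_def z_def i(2) L_def cc_def
          by (simp add: inner_commute)
      qed
      have "orthogonal z z" by (rule orthogonal_to_span) (use sp orth in auto)
      then have "z = 0" unfolding orthogonal_def by simp
      then show False unfolding z_def by (simp add: zero_prod_def)
    qed
    have good: "inter_hyp src tgt phi Q S \<noteq> {} \<and> affine (inter_hyp src tgt phi Q S) \<and>
        aff_dim (inter_hyp src tgt phi Q S) = int (DIM('a) - card (N S))"
      if S: "S \<subseteq> E" and bal: "balanced src tgt phi S" and small: "card (N S) \<le> DIM('a)" for S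
    proof -
      have QF1: "Q \<in> F1 S" using QGS[OF S] small unfolding GS_def by simp
      have li: "lin_indep (\<lambda>i. Q$i - Q$(croot src tgt S i)) (N S)" using QF1 unfolding F1_def by simp
      have potB: "\<forall>e\<in>S. phi e = pot S (src e) - pot S (tgt e)" using pot_ok[OF S bal] by blast
      have eq: "inter_hyp src tgt phi Q S = {P. \<forall>i\<in>N S. inner (Q$i - Q$(croot src tgt S i)) P =
         ((norm (Q$i))\<^sup>2 - (norm (Q$(croot src tgt S i)))\<^sup>2 - (pot S i - pot S (croot src tgt S i))) / 2}"
        unfolding charB[where S=S and phi=phi and p="pot S" and src=src and tgt=tgt and Q=Q, OF potB] N_def by simp
      show ?thesis unfolding eq
        using linsys[of "N S" "\<lambda>i. Q$i - Q$(croot src tgt S i)"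
          "\<lambda>i. ((norm (Q$i))\<^sup>2 - (norm (Q$(croot src tgt S i)))\<^sup>2 - (pot S i - pot S (croot src tgt S i))) / 2"]
          li by simp
    qed
    have ncle: "ncomp src tgt S \<le> CARD('n)" for S by (rule ncomp_le)
    show "(\<forall>S\<subseteq>E.
         (\<not> balanced src tgt phi S \<or> CARD('n) - ncomp src tgt S > DIM('a)
            \<longrightarrow> inter_hyp src tgt phi Q S = {}) \<and>
         (balanced src tgt phi S \<and> CARD('n) - ncomp src tgt S \<le> DIM('a)
            \<longrightarrow> inter_hyp src tgt phi Q S \<noteq> {} \<and> affine (inter_hyp src tgt phi Q S) \<and>
                aff_dim (inter_hyp src tgt phi Q S) = int (DIM('a) - (CARD('n) - ncomp src tgt S)))) \<and>
      (\<forall>S1\<subseteq>E. \<forall>S2\<subseteq>E.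
         (inter_hyp src tgt phi Q S1 = inter_hyp src tgt phi Q S2 \<and> inter_hyp src tgt phi Q S1 \<noteq> {})
         \<longleftrightarrow> (balanced src tgt phi (S1 \<union> S2) \<and> components src tgt S1 = components src tgt S2 \<and>
              ncomp src tgt S1 \<ge> CARD('n) - DIM('a)))"
    proof (rule conjI)
      show "\<forall>S\<subseteq>E.
         (\<not> balanced src tgt phi S \<or> CARD('n) - ncomp src tgt S > DIM('a)
            \<longrightarrow> inter_hyp src tgt phi Q S = {}) \<and>
         (balanced src tgt phi S \<and> CARD('n) - ncomp src tgt S \<le> DIM('a)
            \<longrightarrow> inter_hyp src tgt phi Q S \<noteq> {} \<and> affine (inter_hyp src tgt phi Q S) \<and>
                aff_dim (inter_hyp src tgt phi Q S) = int (DIM('a) - (CARD('n) - ncomp src tgt S)))"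
      proof (intro allI impI)
        fix S assume S: "S \<subseteq> E"
        have A: "\<not> balanced src tgt phi S \<or> CARD('n) - ncomp src tgt S > DIM('a)
            \<longrightarrow> inter_hyp src tgt phi Q S = {}"
          using emp[OF S] cardN[of S] by simp
        have B: "balanced src tgt phi S \<and> CARD('n) - ncomp src tgt S \<le> DIM('a)
            \<longrightarrow> inter_hyp src tgt phi Q S \<noteq> {} \<and> affine (inter_hyp src tgt phi Q S) \<and>
                aff_dim (inter_hyp src tgt phi Q S) = int (DIM('a) - (CARD('n) - ncomp src tgt S))"
          using good[OF S] cardN[of S] by simp
        show "(\<not> balanced src tgt phi S \<or> CARD('n) - ncomp src tgt S > DIM('a)
            \<longrightarrow> inter_hyp src tgt phi Q S = {}) \<and>
         (balanced src tgt phi S \<and> CARD('n) - ncomp src tgt S \<le> DIM('a)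
            \<longrightarrow> inter_hyp src tgt phi Q S \<noteq> {} \<and> affine (inter_hyp src tgt phi Q S) \<and>
                aff_dim (inter_hyp src tgt phi Q S) = int (DIM('a) - (CARD('n) - ncomp src tgt S)))"
          using A B by (rule conjI)
      qed
    next
      show "\<forall>S1\<subseteq>E. \<forall>S2\<subseteq>E.
         (inter_hyp src tgt phi Q S1 = inter_hyp src tgt phi Q S2 \<and> inter_hyp src tgt phi Q S1 \<noteq> {})
         \<longleftrightarrow> (balanced src tgt phi (S1 \<union> S2) \<and> components src tgt S1 = components src tgt S2 \<and>
              ncomp src tgt S1 \<ge> CARD('n) - DIM('a))"
      proof (intro allI impI)
      fix S1 S2 assume S1: "S1 \<subseteq> E" and S2: "S2 \<subseteq> E"
      have S12: "S1 \<union> S2 \<subseteq> E" using S1 S2 by simp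
      show "(inter_hyp src tgt phi Q S1 = inter_hyp src tgt phi Q S2 \<and> inter_hyp src tgt phi Q S1 \<noteq> {})
         \<longleftrightarrow> (balanced src tgt phi (S1 \<union> S2) \<and> components src tgt S1 = components src tgt S2 \<and>
              ncomp src tgt S1 \<ge> CARD('n) - DIM('a))"
      proof
        assume a: "inter_hyp src tgt phi Q S1 = inter_hyp src tgt phi Q S2 \<and> inter_hyp src tgt phi Q S1 \<noteq> {}"
        let ?I = "inter_hyp src tgt phi Q S1"
        have I12: "inter_hyp src tgt phi Q (S1 \<union> S2) = ?I" using a by (simp add: inter_hyp_Un)
        have ne1: "?I \<noteq> {}" using a by (rule conjunct2)
        have ne2: "inter_hyp src tgt phi Q S2 \<noteq> {}" using conjunct1[OF a] ne1 by simp
        have ne12: "inter_hyp src tgt phi Q (S1 \<union> S2) \<noteq> {}" using I12 ne1 by simp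
        have b1: "balanced src tgt phi S1" using ne1 nonempty_bal by blast
        have b2: "balanced src tgt phi S2" using ne2 nonempty_bal by blast
        have b12: "balanced src tgt phi (S1 \<union> S2)" using ne12 nonempty_bal by blast
        have c1: "card (N S1) \<le> DIM('a)" using emp[OF S1] ne1 by force
        have c2: "card (N S2) \<le> DIM('a)" using emp[OF S2] ne2 by force
        have c12: "card (N (S1 \<union> S2)) \<le> DIM('a)" using emp[OF S12] ne12 by force
        have d1: "aff_dim ?I = int (DIM('a) - card (N S1))" using good[OF S1 b1 c1] by simp
        have d2: "aff_dim ?I = int (DIM('a) - card (N S2))" using good[OF S2 b2 c2] a by simp
        have d12: "aff_dim ?I = int (DIM('a) - card (N (S1 \<union> S2)))" using good[OF S12 b12 c12] I12 by simp
        have e1: "card (N S1) = card (N (S1 \<union> S2))" using d1 d12 c1 c12 by simp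
        have e2: "card (N S2) = card (N (S1 \<union> S2))" using d2 d12 c2 c12 by simp
        have n1: "ncomp src tgt S1 = ncomp src tgt (S1 \<union> S2)"
          using e1 cardN[of S1] cardN[of "S1 \<union> S2"] ncle[of S1] ncle[of "S1 \<union> S2"] by simp
        have n2: "ncomp src tgt S2 = ncomp src tgt (S1 \<union> S2)"
          using e2 cardN[of S2] cardN[of "S1 \<union> S2"] ncle[of S2] ncle[of "S1 \<union> S2"] by simp
        have r1: "conn_rel src tgt S1 = conn_rel src tgt (S1 \<union> S2)"
          by (rule equiv_refine_eq[OF conn_equiv conn_equiv conn_mono])
            (use n1 in \<open>simp_all add: ncomp_def components_def\<close>)
        have r2: "conn_rel src tgt S2 = conn_rel src tgt (S1 \<union> S2)"
          by (rule equiv_refine_eq[OF conn_equiv conn_equiv conn_mono])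
            (use n2 in \<open>simp_all add: ncomp_def components_def\<close>)
        have "components src tgt S1 = components src tgt S2"
          unfolding components_def using r1 r2 by simp
        moreover have "ncomp src tgt S1 \<ge> CARD('n) - DIM('a)" using c1 cardN[of S1] by simp
        ultimately show "balanced src tgt phi (S1 \<union> S2) \<and> components src tgt S1 = components src tgt S2 \<and>
              ncomp src tgt S1 \<ge> CARD('n) - DIM('a)" using b12 by simp
      next
        assume a: "balanced src tgt phi (S1 \<union> S2) \<and> components src tgt S1 = components src tgt S2 \<and>
              ncomp src tgt S1 \<ge> CARD('n) - DIM('a)"
        have r: "conn_rel src tgt S1 = conn_rel src tgt S2" using a comp_eq_conn by blast
        have pot: "\<And>e. e \<in> S1 \<union> S2 \<Longrightarrow> phi e = pot (S1 \<union> S2) (src e) - pot (S1 \<union> S2) (tgt e)"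
          using pot_ok[OF S12] a by blast
        have pot1: "\<forall>e\<in>S1. phi e = pot (S1 \<union> S2) (src e) - pot (S1 \<union> S2) (tgt e)"
          using pot by blast
        have pot2: "\<forall>e\<in>S2. phi e = pot (S1 \<union> S2) (src e) - pot (S1 \<union> S2) (tgt e)"
          using pot by blast
        have eqI: "inter_hyp src tgt phi Q S1 = inter_hyp src tgt phi Q S2"
        proof (rule set_eqI)
          fix P
          show "P \<in> inter_hyp src tgt phi Q S1 \<longleftrightarrow> P \<in> inter_hyp src tgt phi Q S2"
            unfolding char0B[where S=S1 and phi=phi and p="pot (S1 \<union> S2)" and src=src and tgt=tgt and P=P and Q=Q, OF pot1]
              char0B[where S=S2 and phi=phi and p="pot (S1 \<union> S2)" and src=src and tgt=tgt and P=P and Q=Q, OF pot2] r ..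
        qed
        have b1: "balanced src tgt phi S1" using a bal_mono by blast
        have "CARD('n) - DIM('a) \<le> ncomp src tgt S1" using a by blast
        then have c1: "card (N S1) \<le> DIM('a)" using cardN[of S1] by arith
        have "inter_hyp src tgt phi Q S1 \<noteq> {}" using good[OF S1 b1 c1] by simp
        then show "inter_hyp src tgt phi Q S1 = inter_hyp src tgt phi Q S2 \<and> inter_hyp src tgt phi Q S1 \<noteq> {}"
          using eqI by simp
      qed
    qed
    qed
  qed
  have oG: "open G" using odG by (rule conjunct1)
  have cG: "closure G = UNIV" by (rule dense_set_closure) (rule conjunct2[OF odG])
  show ?thesis
    by (rule exI[of _ G]) (intro conjI; fact)
qed


end
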